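(* If $G$ is a connected locally Ore graph of order $n \ge 4$, then $G$ is $3$-connected.
   Context: A graph $G$ is locally Ore if for every vertex $v \in V(G)$ and every pair $u,w$ of non-adjacent vertices in $N(v)$, $\deg_{\langle N(v)\rangle}(u) + \deg_{\langle N(v)\rangle}(w) \ge \deg_G(v)$, where $N(v)$ is the open neighbourhood of $v$ and $\langle N(v)\rangle$ the subgraph induced by it. *)

theory Defs
  imports Main
begin

definition simple_graph :: "'a set \<Rightarrow> ('a \<Rightarrow> 'a \<Rightarrow> bool) \<Rightarrow> bool" where
  "simple_graph V E \<longleftrightarrow> finite V \<and> (\<forall>u v. E u v \<longrightarrow> u \<in> V \<and> v \<in> V)
     \<and> (\<forall>u v. E u v \<longrightarrow> E v u) \<and> (\<forall>v. \<not> E v v)"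

definition nbhd :: "'a set \<Rightarrow> ('a \<Rightarrow> 'a \<Rightarrow> bool) \<Rightarrow> 'a \<Rightarrow> 'a set" where
  "nbhd V E v = {u \<in> V. E v u}"

definition degree :: "'a set \<Rightarrow> ('a \<Rightarrow> 'a \<Rightarrow> bool) \<Rightarrow> 'a \<Rightarrow> nat" where
  "degree V E v = card (nbhd V E v)"

definition induced_degree :: "'a set \<Rightarrow> ('a \<Rightarrow> 'a \<Rightarrow> bool) \<Rightarrow> 'a \<Rightarrow> nat" where
  "induced_degree S E u = card {w \<in> S. E u w}"

definition locally_ore :: "'a set \<Rightarrow> ('a \<Rightarrow> 'a \<Rightarrow> bool) \<Rightarrow> bool" where
  "locally_ore V E \<longleftrightarrow> (\<forall>v \<in> V. \<forall>u \<in> nbhd V E v. \<forall>w \<in> nbhd V E v.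
      u \<noteq> w \<and> \<not> E u w \<longrightarrow>
      induced_degree (nbhd V E v) E u + induced_degree (nbhd V E v) E w \<ge> degree V E v)"

definition connected_on :: "'a set \<Rightarrow> ('a \<Rightarrow> 'a \<Rightarrow> bool) \<Rightarrow> bool" where
  "connected_on S E \<longleftrightarrow> S \<noteq> {} \<and>
     (\<forall>u \<in> S. \<forall>v \<in> S. (\<lambda>x y. E x y \<and> x \<in> S \<and> y \<in> S)\<^sup>*\<^sup>* u v)"

definition k_connected :: "nat \<Rightarrow> 'a set \<Rightarrow> ('a \<Rightarrow> 'a \<Rightarrow> bool) \<Rightarrow> bool" where
  "k_connected k V E \<longleftrightarrow> card V > k \<and>
     (\<forall>X \<subseteq> V. card X < k \<longrightarrow> connected_on (V - X) E)"

end

theory Submission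
  imports Defs
begin

definition RR :: "'a set \<Rightarrow> ('a \<Rightarrow> 'a \<Rightarrow> bool) \<Rightarrow> 'a \<Rightarrow> 'a \<Rightarrow> bool" where
  "RR W E = (\<lambda>x y. E x y \<and> x \<in> W \<and> y \<in> W)"

lemma boundary:
  assumes "connected_on W E" "S \<subseteq> W" "s0 \<in> S" "t0 \<in> W" "t0 \<notin> S"
  shows "\<exists>s\<in>S. \<exists>t\<in>W-S. E s t"
proof -
  have p: "(RR W E)\<^sup>*\<^sup>* s0 t0" using assms unfolding connected_on_def RR_def by blast
  have "\<And>z. (RR W E)\<^sup>*\<^sup>* s0 z \<Longrightarrow> z \<in> S \<or> (\<exists>s\<in>S. \<exists>t\<in>W-S. E s t)"
  proof -
    fix z assume "(RR W E)\<^sup>*\<^sup>* s0 z"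
    then show "z \<in> S \<or> (\<exists>s\<in>S. \<exists>t\<in>W-S. E s t)"
    proof (induction rule: rtranclp_induct)
      case base then show ?case using assms by simp
    next
      case (step y z) then show ?case unfolding RR_def by blast
    qed
  qed
  from this[OF p] assms show ?thesis by blast
qed

lemma local_lemma:
  assumes sg: "simple_graph V E" and lo: "locally_ore V E" and xV: "x \<in> V"
    and sub: "nbhd V E x \<subseteq> P \<union> Q \<union> {y}"
    and a: "a \<in> nbhd V E x" "a \<in> P" and b: "b \<in> nbhd V E x" "b \<in> Q"
    and disj: "P \<inter> Q = {}" and noe: "\<forall>p\<in>P. \<forall>q\<in>Q. \<not> E p q"
  shows False
proof -
  define N where "N = nbhd V E x"
  have fN: "finite N" using sg unfolding simple_graph_def N_def nbhd_def by auto
  define D where "D = N - P - Q"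
  have D1: "card D \<le> 1"
  proof -
    have "D \<subseteq> {y}" using sub unfolding D_def N_def by auto
    then show ?thesis using card_mono[of "{y}" D] by simp
  qed
  have cN: "card N = card (N \<inter> P) + card (N \<inter> Q) + card D"
  proof -
    have "N = (N \<inter> P) \<union> (N \<inter> Q) \<union> D" unfolding D_def by auto
    moreover have "card ((N \<inter> P) \<union> (N \<inter> Q) \<union> D) = card ((N \<inter> P) \<union> (N \<inter> Q)) + card D"
      by (rule card_Un_disjoint) (use fN in \<open>auto simp: D_def\<close>)
    moreover have "card ((N \<inter> P) \<union> (N \<inter> Q)) = card (N \<inter> P) + card (N \<inter> Q)"
      by (rule card_Un_disjoint) (use fN disj in auto)
    ultimately show ?thesis by simp
  qed
  have da: "induced_degree N E a \<le> card (N \<inter> P) - 1 + card D"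
  proof -
    have "{w \<in> N. E a w} \<subseteq> (N \<inter> P - {a}) \<union> D"
      using a noe sg unfolding D_def simple_graph_def by auto
    hence "card {w \<in> N. E a w} \<le> card ((N \<inter> P - {a}) \<union> D)"
      by (intro card_mono) (use fN in \<open>auto simp: D_def\<close>)
    also have "\<dots> \<le> card (N \<inter> P - {a}) + card D" by (rule card_Un_le)
    also have "card (N \<inter> P - {a}) = card (N \<inter> P) - 1"
      using a fN N_def by (simp add: card_Diff_singleton)
    finally show ?thesis unfolding induced_degree_def .
  qed
  have db: "induced_degree N E b \<le> card (N \<inter> Q) - 1 + card D"
  proof -
    have "{w \<in> N. E b w} \<subseteq> (N \<inter> Q - {b}) \<union> D"
      using b noe sg unfolding D_def simple_graph_def by blast
    hence "card {w \<in> N. E b w} \<le> card ((N \<inter> Q - {b}) \<union> D)"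
      by (intro card_mono) (use fN in \<open>auto simp: D_def\<close>)
    also have "\<dots> \<le> card (N \<inter> Q - {b}) + card D" by (rule card_Un_le)
    also have "card (N \<inter> Q - {b}) = card (N \<inter> Q) - 1"
      using b fN N_def by (simp add: card_Diff_singleton)
    finally show ?thesis unfolding induced_degree_def .
  qed
  have pa: "card (N \<inter> P) \<ge> 1" using a fN N_def by (auto simp: Suc_le_eq card_gt_0_iff)
  have pb: "card (N \<inter> Q) \<ge> 1" using b fN N_def by (auto simp: Suc_le_eq card_gt_0_iff)
  have "a \<noteq> b" "\<not> E a b" using a b disj noe by auto
  hence "induced_degree N E a + induced_degree N E b \<ge> degree V E x"
    using lo xV a b unfolding locally_ore_def N_def by blast
  hence "induced_degree N E a + induced_degree N E b \<ge> card N"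
    unfolding degree_def N_def .
  with da db cN D1 pa pb show False by linarith
qed

lemma two_elem:
  assumes "finite X" "card X \<le> 2" "x \<in> X" shows "\<exists>y. X \<subseteq> {x, y}"
proof -
  have "card (X - {x}) \<le> 1" using assms by (simp add: card_Diff_singleton)
  then obtain y where "X - {x} \<subseteq> {y}"
    using assms(1) by (metis One_nat_def card_le_Suc0_iff_eq finite_Diff insertCI subsetI)
  thus ?thesis by blast
qed

lemma setup_lemma:
  assumes sg: "simple_graph V E" and con: "connected_on V E"
    and XV: "X \<subseteq> V" and u: "u \<in> V - X" and v: "v \<in> V - X"
    and nr: "\<not> (RR (V - X) E)\<^sup>*\<^sup>* u v"
  defines "S \<equiv> {z. (RR (V - X) E)\<^sup>*\<^sup>* u z}"
  defines "T \<equiv> V - X - S"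
  shows "S \<subseteq> V - X" "u \<in> S" "v \<in> T" "S \<inter> T = {}"
    "\<forall>p\<in>S. \<forall>q\<in>T. \<not> E p q"
    "\<And>x. x \<in> V \<Longrightarrow> nbhd V E x \<subseteq> S \<union> T \<union> X"
    "\<exists>x1\<in>X. \<exists>s\<in>S. E x1 s" "\<exists>x2\<in>X. \<exists>t\<in>T. E x2 t"
proof -
  show SW: "S \<subseteq> V - X"
  proof
    fix z assume "z \<in> S"
    hence "(RR (V - X) E)\<^sup>*\<^sup>* u z" unfolding S_def by simp
    thus "z \<in> V - X" using u by (induction rule: rtranclp_induct) (auto simp: RR_def)
  qed
  show uS: "u \<in> S" unfolding S_def by simp
  show vT: "v \<in> T" using v nr unfolding T_def S_def by simp
  show "S \<inter> T = {}" unfolding T_def by auto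
  have cl: "\<And>s t. s \<in> S \<Longrightarrow> t \<in> V - X \<Longrightarrow> E s t \<Longrightarrow> t \<in> S"
  proof -
    fix s t assume "s \<in> S" "t \<in> V - X" "E s t"
    hence "(RR (V - X) E)\<^sup>*\<^sup>* u s" "RR (V - X) E s t" using SW unfolding S_def RR_def by auto
    thus "t \<in> S" unfolding S_def by simp
  qed
  show noe: "\<forall>p\<in>S. \<forall>q\<in>T. \<not> E p q" using cl unfolding T_def by blast
  show "\<And>x. x \<in> V \<Longrightarrow> nbhd V E x \<subseteq> S \<union> T \<union> X" unfolding nbhd_def T_def by auto
  have sym: "\<And>a b. E a b \<Longrightarrow> E b a" using sg unfolding simple_graph_def by blast
  have inV: "\<And>a b. E a b \<Longrightarrow> a \<in> V \<and> b \<in> V" using sg unfolding simple_graph_def by blast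
  obtain s t where st: "s \<in> S" "t \<in> V - S" "E s t"
    using boundary[OF con, of S u v] SW uS vT unfolding T_def by blast
  have "t \<in> X" using cl st by blast
  thus "\<exists>x1\<in>X. \<exists>s\<in>S. E x1 s" using st sym by blast
  obtain t' z where tz: "t' \<in> T" "z \<in> V - T" "E t' z"
    using boundary[OF con, of T v u] SW uS vT unfolding T_def by blast
  have "z \<notin> S" using noe tz sym by blast
  hence "z \<in> X" using tz unfolding T_def by blast
  thus "\<exists>x2\<in>X. \<exists>t\<in>T. E x2 t" using tz sym by blast
qed

lemma sep:
  assumes sg: "simple_graph V E" and con: "connected_on V E" and lo: "locally_ore V E"
    and XV: "X \<subseteq> V" and u: "u \<in> V - X" and v: "v \<in> V - X"
    and nr: "\<not> (RR (V - X) E)\<^sup>*\<^sup>* u v"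
    and xX: "x \<in> X" and Xy: "X \<subseteq> {x, y}"
    and s: "s \<in> {z. (RR (V - X) E)\<^sup>*\<^sup>* u z}" "E x s"
    and t: "t \<in> V - X - {z. (RR (V - X) E)\<^sup>*\<^sup>* u z}" "E x t"
  shows False
proof -
  note L = setup_lemma[OF sg con XV u v nr]
  have xV: "x \<in> V" using xX XV by blast
  have sV: "s \<in> V" "t \<in> V" using s t L(1) by auto
  show False
  proof (rule local_lemma[OF sg lo xV, where P = "{z. (RR (V - X) E)\<^sup>*\<^sup>* u z}"
        and Q = "V - X - {z. (RR (V - X) E)\<^sup>*\<^sup>* u z}" and y = y and a = s and b = t])
    show "nbhd V E x \<subseteq> {z. (RR (V - X) E)\<^sup>*\<^sup>* u z} \<union> (V - X - {z. (RR (V - X) E)\<^sup>*\<^sup>* u z}) \<union> {y}"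
    proof -
      have "x \<notin> nbhd V E x" using sg unfolding simple_graph_def nbhd_def by auto
      thus ?thesis using L(6)[OF xV] Xy by blast
    qed
    show "s \<in> nbhd V E x" "t \<in> nbhd V E x" using s t sV unfolding nbhd_def by auto
  qed (use s t L(5) in auto)
qed

lemma phase1:
  assumes sg: "simple_graph V E" and con: "connected_on V E" and lo: "locally_ore V E"
    and xV: "x \<in> V" and ne: "V - {x} \<noteq> {}"
  shows "connected_on (V - {x}) E"
  unfolding connected_on_def
proof (intro conjI ballI ne)
  fix u v assume u: "u \<in> V - {x}" and v: "v \<in> V - {x}"
  show "(\<lambda>a b. E a b \<and> a \<in> V - {x} \<and> b \<in> V - {x})\<^sup>*\<^sup>* u v"
  proof (rule ccontr)
    assume "\<not> ?thesis"
    hence nr: "\<not> (RR (V - {x}) E)\<^sup>*\<^sup>* u v" unfolding RR_def .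
    note L = setup_lemma[OF sg con _ u v nr] 
    from L(7) xV obtain s where "s \<in> {z. (RR (V - {x}) E)\<^sup>*\<^sup>* u z}" "E x s" by auto
    moreover from L(8) xV obtain t where "t \<in> V - {x} - {z. (RR (V - {x}) E)\<^sup>*\<^sup>* u z}" "E x t" by auto
    ultimately show False using sep[OF sg con lo _ u v nr, of x x] xV by blast
  qed
qed

theorem mainTheorem4:
  fixes V :: "'a set" and E :: "'a \<Rightarrow> 'a \<Rightarrow> bool"
  assumes "simple_graph V E"
    and "connected_on V E"
    and "locally_ore V E"
    and "card V \<ge> 4"
  shows "k_connected 3 V E"
proof -
  note sg = assms(1) and con = assms(2) and lo = assms(3)
  have fV: "finite V" using sg unfolding simple_graph_def by blast
  show ?thesis unfolding k_connected_def
  proof (intro conjI allI impI)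
    show "card V > 3" using assms(4) by simp
    fix X assume XV: "X \<subseteq> V" and cX: "card X < 3"
    have fX: "finite X" using XV fV finite_subset by blast
    have cVX: "card (V - X) = card V - card X" using fX XV by (simp add: card_Diff_subset)
    hence "card (V - X) > 0" using assms(4) cX by linarith
    hence neVX: "V - X \<noteq> {}" by (intro notI) simp
    show "connected_on (V - X) E" unfolding connected_on_def
    proof (intro conjI ballI neVX)
      fix u v assume u: "u \<in> V - X" and v: "v \<in> V - X"
      show "(\<lambda>a b. E a b \<and> a \<in> V - X \<and> b \<in> V - X)\<^sup>*\<^sup>* u v"
      proof (rule ccontr)
        assume "\<not> ?thesis"
        hence nr: "\<not> (RR (V - X) E)\<^sup>*\<^sup>* u v" unfolding RR_def .
        define S where "S = {z. (RR (V - X) E)\<^sup>*\<^sup>* u z}"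
        note L = setup_lemma[OF sg con XV u v nr, folded S_def]
        note SP = sep[OF sg con lo XV u v nr, folded S_def]
        have sym: "\<And>a b. E a b \<Longrightarrow> E b a" using sg unfolding simple_graph_def by blast
        obtain x1 s1 where x1: "x1 \<in> X" "s1 \<in> S" "E x1 s1" using L(7) by blast
        obtain x2 t2 where x2: "x2 \<in> X" "t2 \<in> V - X - S" "E x2 t2" using L(8) by blast
        obtain y1 where y1: "X \<subseteq> {x1, y1}" using two_elem[OF fX _ x1(1)] cX by auto
        obtain y2 where y2: "X \<subseteq> {x2, y2}" using two_elem[OF fX _ x2(1)] cX by auto
        have n1: "\<not> (\<exists>t\<in>V - X - S. E x1 t)" using SP[OF x1(1) y1 x1(2,3)] by blast
        have n2: "\<not> (\<exists>s\<in>S. E x2 s)" using SP[OF x2(1) y2 _ _ x2(2,3)] by blast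
        have ne: "x1 \<noteq> x2" using n1 x2 by blast
        have X2: "x2 = y1" using y1 x2(1) ne by blast
        have x2V: "x2 \<in> V" using x2 XV by blast
        have VX: "V - {x2} \<noteq> {}" using u x2(1) by blast
        have C: "connected_on (V - {x2}) E" by (rule phase1[OF sg con lo x2V VX])
        have sub1: "S \<union> {x1} \<subseteq> V - {x2}" using L(1) x1(1) x2(1) XV ne by blast
        have u1: "u \<in> S \<union> {x1}" using L(2) by simp
        have v1: "v \<in> V - {x2}" using v x2(1) by blast
        have v2: "v \<notin> S \<union> {x1}" using L(3) v x1(1) by blast
        have ex: "\<exists>s\<in>S \<union> {x1}. \<exists>t\<in>(V - {x2}) - (S \<union> {x1}). E s t"
          by (rule boundary[OF C sub1 u1 v1 v2])
        then obtain a b where ab: "a \<in> S \<union> {x1}" "b \<in> (V - {x2}) - (S \<union> {x1})" "E a b"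
          by blast
        have bT: "b \<in> V - X - S" using ab(2) y1 X2 by blast
        show False
        proof (cases "a = x1")
          case True thus False using n1 bT ab(3) by blast
        next
          case False hence "a \<in> S" using ab(1) by blast
          thus False using L(5) bT ab(3) by blast
        qed
      qed
    qed
  qed
qed

end
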